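(* Let $k>\ell\ge1$, $m\ge1$ and $w=a^kba^\ell b^m$, and let $u\in L^{\epsilon}_{\vdash_{\{w\}}}$. If $a^\alpha b$ is a prefix of $u$ then $\alpha\ge k$; if $a^\alpha b^2$ is a prefix of $u$ then $\alpha\ge 2k$.
   Context: For words $u,v$, the shuffle $u \sqcup\!\sqcup v$ is the set of all words $u_1v_1\cdots u_kv_k$ with $k\ge 1$, $u=u_1\cdots u_k$, $v=v_1\cdots v_k$ (pieces possibly empty). For a finite set $I$ of words, $v \vdash_I w$ means $w \in v \sqcup\!\sqcup u$ for some $u\in I$; $\vdash_I^*$ is its reflexive-transitive closure and $L^{\epsilon}_{\vdash_I}=\{w : \epsilon \vdash_I^* w\}$. *)

theory Defs
  imports Main
begin

definition shuffle :: "'a list \<Rightarrow> 'a list \<Rightarrow> 'a list set" where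
  "shuffle u v = {w. \<exists>us vs. length us = length vs \<and> length us \<ge> 1 \<and>
      u = concat us \<and> v = concat vs \<and> w = concat (map (\<lambda>(x, y). x @ y) (zip us vs))}"

definition ins_step :: "'a list set \<Rightarrow> 'a list \<Rightarrow> 'a list \<Rightarrow> bool" where
  "ins_step I v w \<longleftrightarrow> (\<exists>u\<in>I. w \<in> shuffle v u)"

definition L_eps :: "'a list set \<Rightarrow> 'a list set" where
  "L_eps I = {w. (ins_step I)\<^sup>*\<^sup>* [] w}"

end

theory Submission
  imports Defs
begin

inductive il :: "'a list \<Rightarrow> 'a list \<Rightarrow> 'a list \<Rightarrow> bool" where
  il_nil: "il [] [] []"
| il_l: "il xs ys zs \<Longrightarrow> il (x#xs) ys (x#zs)"
| il_r: "il xs ys zs \<Longrightarrow> il xs (y#ys) (y#zs)"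

lemma il_appL: "il xs ys zs \<Longrightarrow> il (p@xs) ys (p@zs)"
  by (induction p) (auto intro: il.intros)

lemma il_appR: "il xs ys zs \<Longrightarrow> il xs (p@ys) (p@zs)"
  by (induction p) (auto intro: il.intros)

lemma il_concat: "length us = length vs \<Longrightarrow>
   il (concat us) (concat vs) (concat (map (\<lambda>(x, y). x @ y) (zip us vs)))"
proof (induction us arbitrary: vs)
  case Nil then show ?case by (simp add: il_nil)
next
  case (Cons x us)
  then obtain y vs' where "vs = y # vs'" by (cases vs) auto
  with Cons show ?case by (simp add: il_appL il_appR)
qed

lemma shuffle_il: "z \<in> shuffle v w \<Longrightarrow> il v w z"
  unfolding shuffle_def using il_concat by blast

lemma il_rep: "il v w (replicate \<alpha> a @ s) \<Longrightarrow> \<exists>i j v' w'. i + j = \<alpha> \<and> v = replicate i a @ v'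
   \<and> w = replicate j a @ w' \<and> il v' w' s"
proof (induction \<alpha> arbitrary: v w)
  case 0 then show ?case by force
next
  case (Suc n)
  from Suc.prems have "il v w (a # (replicate n a @ s))" by simp
  then show ?case
  proof cases
    case (il_l xs)
    from Suc.IH[OF il_l(2)] obtain i j v' w' where "i + j = n" "xs = replicate i a @ v'"
      "w = replicate j a @ w'" "il v' w' s" by blast
    then show ?thesis using il_l(1) by (intro exI[of _ "Suc i"] exI[of _ j]) auto
  next
    case (il_r ys)
    from Suc.IH[OF il_r(2)] obtain i j v' w' where "i + j = n" "v = replicate i a @ v'"
      "ys = replicate j a @ w'" "il v' w' s" by blast
    then show ?thesis using il_r(1) by (intro exI[of _ i] exI[of _ "Suc j"]) auto
  qed
qed

lemma il_cons: "il v w (b # r) \<Longrightarrow> (\<exists>v'. v = b # v' \<and> il v' w r) \<or> (\<exists>w'. w = b # w' \<and> il v w' r)"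
  by (cases rule: il.cases) auto

lemma rep_b: "a \<noteq> b \<Longrightarrow> replicate j a @ b # x = replicate k a @ b # y \<Longrightarrow> j = k \<and> x = y"
proof (induction j arbitrary: k)
  case 0 then show ?case by (cases k) auto
next
  case (Suc j) then show ?case by (cases k) auto
qed

definition Q :: "'c \<Rightarrow> 'c \<Rightarrow> nat \<Rightarrow> 'c list \<Rightarrow> bool" where
  "Q a b k x \<longleftrightarrow> (\<forall>\<alpha> r. x = replicate \<alpha> a @ b # r \<longrightarrow> \<alpha> \<ge> k)
     \<and> (\<forall>\<alpha> r. x = replicate \<alpha> a @ b # b # r \<longrightarrow> \<alpha> \<ge> 2 * k)"

theorem lemma6:
  fixes a b :: 'c and k l m \<alpha> :: nat and u :: "'c list"
  assumes "a \<noteq> b" and "k > l" and "l \<ge> 1" and "m \<ge> 1"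
    and "u \<in> L_eps {replicate k a @ [b] @ replicate l a @ replicate m b}"
  shows "((\<exists>v. u = replicate \<alpha> a @ [b] @ v) \<longrightarrow> \<alpha> \<ge> k)
       \<and> ((\<exists>v. u = replicate \<alpha> a @ [b, b] @ v) \<longrightarrow> \<alpha> \<ge> 2 * k)"
proof -
  define w where "w = replicate k a @ [b] @ replicate l a @ replicate m b"
  have w1: "j = k" if "w = replicate j a @ b # r" for j r
    using rep_b[OF assms(1), of j r k "replicate l a @ replicate m b"] that unfolding w_def by simp
  have w2: False if "w = replicate j a @ b # b # r" for j r
  proof -
    from rep_b[OF assms(1), of j "b # r" k] that have "b # r = replicate l a @ replicate m b"
      unfolding w_def by auto
    with assms(3) show False using assms(1) by (cases l) auto
  qed
  have QS: "Q a b k z" if "Q a b k v" "il v w z" for v z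
    unfolding Q_def
  proof (intro conjI allI impI)
    fix \<beta> r assume "z = replicate \<beta> a @ b # r"
    with il_rep[of v w \<beta> a "b # r"] that(2) obtain i j v' w' where
      h: "i + j = \<beta>" "v = replicate i a @ v'" "w = replicate j a @ w'" "il v' w' (b # r)" by auto
    from il_cons[OF h(4)] show "\<beta> \<ge> k"
    proof
      assume "\<exists>v''. v' = b # v'' \<and> il v'' w' r"
      then show ?thesis using that(1) h unfolding Q_def by fastforce
    next
      assume "\<exists>w''. w' = b # w'' \<and> il v' w'' r"
      then show ?thesis using w1 h by fastforce
    qed
  next
    fix \<beta> r assume "z = replicate \<beta> a @ b # b # r"
    with il_rep[of v w \<beta> a "b # b # r"] that(2) obtain i j v' w' where
      h: "i + j = \<beta>" "v = replicate i a @ v'" "w = replicate j a @ w'" "il v' w' (b # b # r)" by auto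
    from il_cons[OF h(4)] show "\<beta> \<ge> 2 * k"
    proof
      assume "\<exists>v''. v' = b # v'' \<and> il v'' w' (b # r)"
      then obtain v'' where v'': "v' = b # v''" "il v'' w' (b # r)" by blast
      from il_cons[OF v''(2)] show ?thesis
      proof
        assume "\<exists>v3. v'' = b # v3 \<and> il v3 w' r"
        then show ?thesis using that(1) h v'' unfolding Q_def by fastforce
      next
        assume "\<exists>w3. w' = b # w3 \<and> il v'' w3 r"
        then obtain w3 where "w' = b # w3" by blast
        then have "j = k" using w1 h by blast
        moreover have "i \<ge> k" using that(1) h v'' unfolding Q_def by fastforce
        ultimately show ?thesis using h by simp
      qed
    next
      assume "\<exists>w''. w' = b # w'' \<and> il v' w'' (b # r)"
      then obtain w'' where w'': "w' = b # w''" "il v' w'' (b # r)" by blast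
      from il_cons[OF w''(2)] show ?thesis
      proof
        assume "\<exists>v3. v' = b # v3 \<and> il v3 w'' r"
        then obtain v3 where "v' = b # v3" by blast
        then have "i \<ge> k" using that(1) h unfolding Q_def by fastforce
        moreover have "j = k" using w1 h w'' by blast
        ultimately show ?thesis using h by simp
      next
        assume "\<exists>w3. w'' = b # w3 \<and> il v' w3 r"
        then show ?thesis using w2 h w'' by blast
      qed
    qed
  qed
  have "(ins_step {w})\<^sup>*\<^sup>* [] u" using assms(5) unfolding L_eps_def w_def by simp
  then have "Q a b k u"
  proof (induction rule: rtranclp_induct)
    case base then show ?case unfolding Q_def by auto
  next
    case (step y z)
    then have "il y w z" unfolding ins_step_def using shuffle_il by blast
    with QS step.IH show ?case by blast
  qed
  then show ?thesis unfolding Q_def by auto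
qed

end
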